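(* Let $\mathcal{A}$ be a pOC with state set $Q$ whose underlying chain $\mathcal{X}$ is strongly connected, with trend $t>0$, and assume $[p{\downarrow}]>0$ for all $p\in Q$. Let $v$ be a potential, $|v|=v_{\max}-v_{\min}$, and let $p\in Q$ satisfy $v_p=v_{\max}$. Then $$[p{\uparrow}]\ge\frac{t^3}{12(2|v|+4)^3}.$$
   Context: A pOC is $\mathcal{A}=(Q,\delta^{=0},\delta^{>0},P^{=0},P^{>0})$ with the following components. - $\delta^{>0}\subseteq Q\times\{-1,0,1\}\times Q$ are the positive rules and $\delta^{=0}\subseteq Q\times\{0,1\}\times Q$ are the zero rules. Every state has both kinds of outgoing rule. - $P^{>0}$ and $P^{=0}$ are positive probability distributions over the outgoing rules of each state. $\mathcal{M}_\mathcal{A}$ is the Markov chain on configurations $p(i)$ with the following transitions: - $p(0)\to q(c)$ with probability $P^{=0}(p,c,q)$; - for $i\ge1$, $p(i)\to q(i+c)$ with probability $P^{>0}(p,c,q)$. $[p{\uparrow}]$ is the probability that a run from $p(1)$ never reaches counter value zero, and $[p{\downarrow}]=1-[p{\uparrow}]$. $\mathcal{X}$ is the finite Markov chain on $Q$ with transition matrix $A_{pq}=\sum_cP^{>0}(p,c,q)$. With $\alpha$ its invariant distribution and $s_p=\sum_{(p,c,q)\in\delta^{>0}}P^{>0}(p,c,q)c$, the trend is $t=\alpha s$. A potential is $v\in\mathbb{R}^Q$ with $s+Av=v+\mathbf{1}t$. $v_{\max}$ and $v_{\min}$ are its largest and smallest components. *)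

theory Defs
  imports Complex_Main
begin

text \<open>Rules are encoded by their probabilities:
  Ppos p c q = P^{>0}(p,c,q), Pzero p c q = P^{=0}(p,c,q); the rule sets
  delta^{>0}, delta^{=0} are exactly the supports of these functions.\<close>

definition pOC :: "('q::finite \<Rightarrow> int \<Rightarrow> 'q \<Rightarrow> real) \<Rightarrow> ('q \<Rightarrow> int \<Rightarrow> 'q \<Rightarrow> real) \<Rightarrow> bool" where
  "pOC Pzero Ppos \<longleftrightarrow>
     (\<forall>p c q. Ppos p c q \<ge> 0 \<and> Pzero p c q \<ge> 0) \<and>
     (\<forall>p c q. Ppos p c q \<noteq> 0 \<longrightarrow> c \<in> {-1, 0, 1}) \<and>
     (\<forall>p c q. Pzero p c q \<noteq> 0 \<longrightarrow> c \<in> {0, 1}) \<and>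
     (\<forall>p. (\<Sum>q\<in>UNIV. \<Sum>c\<in>{-1,0,1}. Ppos p c q) = 1) \<and>
     (\<forall>p. (\<Sum>q\<in>UNIV. \<Sum>c\<in>{0,1}. Pzero p c q) = 1)"

text \<open>Probability that the run of M_A from q(i) visits counter value 0 within n steps.
  (From a positive counter value only positive rules are used.)\<close>
fun reach0 :: "('q::finite \<Rightarrow> int \<Rightarrow> 'q \<Rightarrow> real) \<Rightarrow> nat \<Rightarrow> 'q \<Rightarrow> nat \<Rightarrow> real" where
  "reach0 Ppos 0 q i = (if i = 0 then 1 else 0)"
| "reach0 Ppos (Suc n) q i =
     (if i = 0 then 1
      else (\<Sum>q'\<in>UNIV. \<Sum>c\<in>{-1,0,1}. Ppos q c q' * reach0 Ppos n q' (nat (int i + c))))"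

text \<open>[p down]: probability that a run from p(1) ever reaches counter value zero
  (limit = supremum of the increasing step-bounded probabilities); [p up] = 1 - [p down].\<close>
definition pdown :: "('q::finite \<Rightarrow> int \<Rightarrow> 'q \<Rightarrow> real) \<Rightarrow> 'q \<Rightarrow> real" where
  "pdown Ppos p = (SUP n. reach0 Ppos n p 1)"

definition pup :: "('q::finite \<Rightarrow> int \<Rightarrow> 'q \<Rightarrow> real) \<Rightarrow> 'q \<Rightarrow> real" where
  "pup Ppos p = 1 - pdown Ppos p"

definition Amat :: "('q::finite \<Rightarrow> int \<Rightarrow> 'q \<Rightarrow> real) \<Rightarrow> 'q \<Rightarrow> 'q \<Rightarrow> real" where
  "Amat Ppos p q = (\<Sum>c\<in>{-1,0,1}. Ppos p c q)"

definition svec :: "('q::finite \<Rightarrow> int \<Rightarrow> 'q \<Rightarrow> real) \<Rightarrow> 'q \<Rightarrow> real" where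
  "svec Ppos p = (\<Sum>q\<in>UNIV. \<Sum>c\<in>{-1,0,1}. Ppos p c q * real_of_int c)"

definition strongly_connected :: "('q \<Rightarrow> 'q \<Rightarrow> real) \<Rightarrow> bool" where
  "strongly_connected A \<longleftrightarrow> (\<forall>p q. (p, q) \<in> {(x, y). A x y > 0}\<^sup>*)"

definition invariant_dist :: "('q::finite \<Rightarrow> 'q \<Rightarrow> real) \<Rightarrow> ('q \<Rightarrow> real) \<Rightarrow> bool" where
  "invariant_dist A \<alpha> \<longleftrightarrow> (\<forall>p. \<alpha> p \<ge> 0) \<and> (\<Sum>p\<in>UNIV. \<alpha> p) = 1 \<and>
     (\<forall>q. (\<Sum>p\<in>UNIV. \<alpha> p * A p q) = \<alpha> q)"

definition trend :: "('q::finite \<Rightarrow> int \<Rightarrow> 'q \<Rightarrow> real) \<Rightarrow> ('q \<Rightarrow> real) \<Rightarrow> real" where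
  "trend Ppos \<alpha> = (\<Sum>p\<in>UNIV. \<alpha> p * svec Ppos p)"

definition potential :: "('q::finite \<Rightarrow> int \<Rightarrow> 'q \<Rightarrow> real) \<Rightarrow> real \<Rightarrow> ('q \<Rightarrow> real) \<Rightarrow> bool" where
  "potential Ppos t v \<longleftrightarrow>
     (\<forall>p. svec Ppos p + (\<Sum>q\<in>UNIV. Amat Ppos p q * v q) = v p + t)"

end

theory Submission
  imports Defs
begin

lemma exp_quad:
  fixes y :: real assumes "\<bar>y\<bar> \<le> 1" shows "exp y \<le> 1 + y + y^2"
proof (cases "y \<ge> 0")
  case True then show ?thesis using assms exp_bound[of y] by simp
next
  case False
  define x where "x = - y"
  have x: "0 < x" "x \<le> 1" using False assms x_def by auto
  have "1 + x \<le> exp x" by simp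
  hence "exp y \<le> 1 / (1 + x)" using x by (simp add: x_def exp_minus field_simps)
  also have "\<dots> \<le> 1 - x + x^2"
  proof -
    have "1 \<le> (1 + x) * (1 - x + x^2)" using x by (simp add: algebra_simps power2_eq_square power3_eq_cube)
    thus ?thesis using x by (simp add: field_simps)
  qed
  finally show ?thesis by (simp add: x_def)
qed

lemma sum3: "(\<Sum>c\<in>{-1,0,1::int}. f c) = f (-1) + f 0 + (f 1 :: real)"
  by simp

theorem mainTheorem16:
  fixes Pzero Ppos :: "'q::finite \<Rightarrow> int \<Rightarrow> 'q \<Rightarrow> real"
    and \<alpha> v :: "'q \<Rightarrow> real" and p :: 'q
  assumes "pOC Pzero Ppos"
    and "strongly_connected (Amat Ppos)"
    and "invariant_dist (Amat Ppos) \<alpha>"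
    and "trend Ppos \<alpha> > 0"
    and "\<forall>q. pdown Ppos q > 0"
    and "potential Ppos (trend Ppos \<alpha>) v"
    and "v p = Max (range v)"
  shows "pup Ppos p \<ge> (trend Ppos \<alpha>) ^ 3 /
           (12 * (2 * (Max (range v) - Min (range v)) + 4) ^ 3)"
proof -
  define P where "P = Ppos"
  define t where "t = trend Ppos \<alpha>"
  define vM where "vM = Max (range v)"
  define vm where "vm = Min (range v)"
  define M where "M = 1 + (vM - vm)"
  define lam where "lam = t / M^2"
  have Pnn: "\<And>a c b. P a c b \<ge> 0" using assms(1) unfolding pOC_def P_def by blast
  have Psum: "\<And>a. (\<Sum>b\<in>UNIV. \<Sum>c\<in>{-1,0,1}. P a c b) = 1" using assms(1) unfolding pOC_def P_def by blast
  have Psum3: "\<And>a. (\<Sum>b\<in>UNIV. P a (-1) b + P a 0 b + P a 1 b) = 1" using Psum by (simp add: sum3)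
  have vle: "\<And>q. v q \<le> vM" unfolding vM_def by simp
  have vge: "\<And>q. vm \<le> v q" unfolding vm_def by simp
  have tpos: "t > 0" using assms(4) t_def by simp
  have M1: "M \<ge> 1" using vle[of p] vge[of p] M_def by simp
  have spot: "\<And>q. svec P q + (\<Sum>b\<in>UNIV. Amat P q b * v b) = v q + t"
    using assms(6) unfolding potential_def P_def t_def by blast
  have sbound: "\<And>q. \<bar>svec P q\<bar> \<le> 1"
  proof -
    fix q
    have "svec P q = (\<Sum>b\<in>UNIV. P q 1 b - P q (-1) b)" unfolding svec_def by (simp add: sum3)
    moreover have "\<bar>\<Sum>b\<in>UNIV. P q 1 b - P q (-1) b\<bar> \<le> (\<Sum>b\<in>UNIV. P q (-1) b + P q 0 b + P q 1 b)"
      proof (rule order_trans[OF sum_abs], rule sum_mono)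
        fix b have "P q 1 b \<ge> 0" "P q (-1) b \<ge> 0" "P q 0 b \<ge> 0" using Pnn by auto
        thus "\<bar>P q 1 b - P q (-1) b\<bar> \<le> P q (-1) b + P q 0 b + P q 1 b" by linarith
      qed
    ultimately show "\<bar>svec P q\<bar> \<le> 1" using Psum3[of q] by simp
  qed
  have t1: "t \<le> 1"
  proof -
    have al: "\<And>a. \<alpha> a \<ge> 0" "(\<Sum>a\<in>UNIV. \<alpha> a) = 1" using assms(3) unfolding invariant_dist_def by auto
    have "t = (\<Sum>a\<in>UNIV. \<alpha> a * svec P a)" unfolding t_def trend_def P_def ..
    also have "\<dots> \<le> (\<Sum>a\<in>UNIV. \<alpha> a * 1)"
      by (rule sum_mono, rule mult_left_mono, insert sbound al, auto simp: abs_le_iff)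
    finally show ?thesis using al by simp
  qed
  have lam0: "lam > 0" using tpos M1 lam_def by simp
  have lamM: "lam * M \<le> 1"
  proof -
    have "lam * M = t / M" using M1 by (simp add: lam_def power2_eq_square)
    also have "\<dots> \<le> 1" using t1 M1 tpos by simp
    finally show ?thesis .
  qed
  have lamMM: "lam^2 * M^2 = lam * t" using M1 by (simp add: lam_def power2_eq_square)
  define E where "E = (\<lambda>q b c. exp (- lam * (real_of_int c + v b - v q)))"
  have Eb: "\<And>q b c. c \<in> {-1,0,1} \<Longrightarrow>
      E q b c \<le> 1 - lam * (real_of_int c + v b - v q) + lam * t"
  proof -
    fix q b and c :: int assume c: "c \<in> {-1,0,1}"
    define X where "X = real_of_int c + v b - v q"
    have XM: "\<bar>X\<bar> \<le> M" using c vle[of b] vge[of b] vle[of q] vge[of q] unfolding X_def M_def by auto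
    have "\<bar>- lam * X\<bar> \<le> lam * M" using XM lam0 by (simp add: abs_mult)
    hence "\<bar>- lam * X\<bar> \<le> 1" using lamM by linarith
    hence "E q b c \<le> 1 + (- lam * X) + (- lam * X)^2" unfolding E_def X_def[symmetric] by (rule exp_quad)
    moreover have "(- lam * X)^2 \<le> lam^2 * M^2"
    proof -
      have "X^2 \<le> M^2" using XM M1 by (metis abs_le_square_iff abs_of_nonneg order_trans zero_le_one)
      thus ?thesis using lam0 by (simp add: power_mult_distrib mult_left_mono)
    qed
    ultimately show "E q b c \<le> 1 - lam * (real_of_int c + v b - v q) + lam * t"
      using lamMM X_def by simp
  qed
  have key: "\<And>q. (\<Sum>b\<in>UNIV. \<Sum>c\<in>{-1,0,1}. P q c b * E q b c) \<le> 1"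
  proof -
    fix q
    have "(\<Sum>b\<in>UNIV. \<Sum>c\<in>{-1,0,1}. P q c b * E q b c) \<le>
          (\<Sum>b\<in>UNIV. \<Sum>c\<in>{-1,0,1}. P q c b * (1 - lam * (real_of_int c + v b - v q) + lam * t))"
      by (intro sum_mono mult_left_mono Eb Pnn)
    also have "\<dots> = (1 + lam * t) * (\<Sum>b\<in>UNIV. P q (-1) b + P q 0 b + P q 1 b)
        - lam * ((\<Sum>b\<in>UNIV. P q 1 b - P q (-1) b) + (\<Sum>b\<in>UNIV. (P q (-1) b + P q 0 b + P q 1 b) * v b)
                 - v q * (\<Sum>b\<in>UNIV. P q (-1) b + P q 0 b + P q 1 b))"
      by (simp add: sum3 sum_distrib_left sum_distrib_right sum_subtractf sum.distrib[symmetric] algebra_simps)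
    also have "(\<Sum>b\<in>UNIV. P q 1 b - P q (-1) b) + (\<Sum>b\<in>UNIV. (P q (-1) b + P q 0 b + P q 1 b) * v b) = v q + t"
      using spot[of q] unfolding svec_def Amat_def by (simp add: sum3 algebra_simps)
    finally show "(\<Sum>b\<in>UNIV. \<Sum>c\<in>{-1,0,1}. P q c b * E q b c) \<le> 1" using Psum3[of q] by simp
  qed
  define g where "g = (\<lambda>q (i::nat). exp (- lam * (real i + v q - vM)))"
  have g0: "\<And>q. g q 0 \<ge> 1" unfolding g_def using lam0 vle by (simp add: mult_nonneg_nonpos)
  have ind: "\<And>q i. reach0 P n q i \<le> g q i" for n
  proof (induction n)
    case 0
    then show ?case using g0 by (auto simp: g_def)
  next
    case (Suc n)
    fix q i
    show "reach0 P (Suc n) q i \<le> g q i"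
    proof (cases "i = 0")
      case True then show ?thesis using g0 by simp
    next
      case False
      have "reach0 P (Suc n) q i = (\<Sum>b\<in>UNIV. \<Sum>c\<in>{-1,0,1}. P q c b * reach0 P n b (nat (int i + c)))"
        using False by simp
      also have "\<dots> \<le> (\<Sum>b\<in>UNIV. \<Sum>c\<in>{-1,0,1}. P q c b * (g q i * E q b c))"
      proof (intro sum_mono mult_left_mono Pnn)
        fix b and c :: int assume c: "c \<in> {-1,0,1}"
        have "real (nat (int i + c)) = real i + real_of_int c" using c False by auto
        note eq = this
        have "g b (nat (int i + c)) = exp (- lam * (real i + real_of_int c + v b - vM))"
          unfolding g_def eq by simp
        also have "\<dots> = exp (- lam * (real i + v q - vM) + - lam * (real_of_int c + v b - v q))"
          by (rule arg_cong[where f=exp]) (simp add: algebra_simps)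
        also have "\<dots> = g q i * E q b c" unfolding g_def E_def exp_add ..
        finally have ge: "g b (nat (int i + c)) = g q i * E q b c" .
        show "reach0 P n b (nat (int i + c)) \<le> g q i * E q b c" using Suc.IH[of b "nat (int i + c)"] ge by simp
      qed
      also have "\<dots> = g q i * (\<Sum>b\<in>UNIV. \<Sum>c\<in>{-1,0,1}. P q c b * E q b c)"
        by (simp add: sum_distrib_left algebra_simps)
      also have "\<dots> \<le> g q i * 1"
        by (rule mult_left_mono[OF key], simp add: g_def)
      finally show ?thesis by simp
    qed
  qed
  have "pdown P p \<le> g p 1"
    unfolding pdown_def by (rule cSUP_least, auto intro: ind)
  moreover have "g p 1 = exp (- lam)" unfolding g_def using assms(7) vM_def by simp
  ultimately have "pup P p \<ge> 1 - exp (- lam)" unfolding pup_def by simp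
  moreover have "1 - exp (- lam) \<ge> lam / 2"
  proof -
    have "1 + lam \<le> exp lam" by simp
    hence "inverse (exp lam) \<le> inverse (1 + lam)" using lam0 by (intro le_imp_inverse_le) auto
    hence "exp (- lam) \<le> 1 / (1 + lam)" by (simp add: exp_minus inverse_eq_divide)
    moreover have "lam \<le> 1"
    proof -
      have "lam * 1 \<le> lam * M" using lam0 M1 by (intro mult_left_mono) auto
      thus ?thesis using lamM by linarith
    qed
    hence "1 / (1 + lam) \<le> 1 - lam / 2" using lam0 by (simp add: field_simps)
    moreover note this
    ultimately show ?thesis by simp
  qed
  moreover have "lam / 2 \<ge> t ^ 3 / (12 * (2 * (vM - vm) + 4) ^ 3)"
  proof -
    have d: "2 * (vM - vm) + 4 = 2 * (M + 1)" unfolding M_def by simp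
    have "t ^ 3 / (12 * (2 * (vM - vm) + 4) ^ 3) \<le> t / (12 * (2 * (vM - vm) + 4) ^ 3)"
    proof (rule divide_right_mono)
      have "t^3 = t * t^2" by (simp add: power3_eq_cube power2_eq_square)
      also have "\<dots> \<le> t * 1" using t1 tpos by (intro mult_left_mono) (auto simp: power_le_one)
      finally show "t^3 \<le> t" by simp
    qed (use M1 d in simp)
    also have "\<dots> \<le> t / (2 * M^2)"
    proof (rule divide_left_mono)
      have "M^2 \<le> (M+1)^2" using M1 by (intro power_mono) auto
      also have "\<dots> \<le> (M+1)^3" using M1 by (intro power_increasing) auto
      finally have "M^2 \<le> (M+1)^3" .
      moreover have "(2 * (M + 1)) ^ 3 = 8 * (M + 1) ^ 3" by (subst power_mult_distrib) simp
      moreover have "(M + 1) ^ 3 \<ge> 0" using M1 by simp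
      ultimately show "2 * M^2 \<le> 12 * (2 * (vM - vm) + 4) ^ 3" unfolding d by linarith
    qed (use tpos M1 d in auto)
    also have "\<dots> = lam / 2" unfolding lam_def by simp
    finally show ?thesis .
  qed
  ultimately show ?thesis unfolding P_def t_def vM_def vm_def by linarith
qed

end
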